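(* Let $M$ be a lcm-monoid. Then there exists a left $\mathscr{M}$-brace $(\mathcal{B},\oplus,\cdot)$ such that the monoid $(\mathcal{B},\cdot)$ is isomorphic to $M$. Furthermore, if $M$ is a Gaussian monoid, then there exist a left $\mathscr{M}$-brace $(\mathcal{B},\oplus,\cdot)$ and a right $\mathscr{M}$-brace $(\mathcal{B},+,\cdot)$ (on the same set $\mathcal{B}$ with the same multiplication $\cdot$) such that $(\mathcal{B},\cdot)$ is isomorphic to $M$.
   Context: For elements $a,g$ of a monoid $M$, $a$ is a left divisor of $g$ if $g=ab$ for some $b\in M$, and a right divisor of $g$ if $g=ba$ for some $b\in M$. A lcm (resp. gcd) with respect to left divisibility is a least common multiple (resp. greatest common divisor) for the preorder "is a left divisor of"; similarly for right divisibility. An element $a\neq 1$ of $M$ is an atom if $a=bc$ implies $b=1$ or $c=1$; $M$ is atomic if it is generated by its atoms and every element is a finite product of atoms. A monoid $M$ is a lcm-monoid if (i) $1$ is the unique invertible element of $M$, (ii) $M$ is left cancellative, and (iii) every pair of elements of $M$ has a lcm with respect to left divisibility. A monoid $M$ is a Gaussian monoid if (i) $M$ is atomic, (ii) $M$ is cancellative (left and right), and (iii) every pair of elements of $M$ has a lcm and a gcd with respect to both left and right divisibility. A left $\mathscr{M}$-brace is a set $\mathcal{B}$ with two operations $\oplus$ and $\cdot$ such that $(\mathcal{B},\oplus)$ is a commutative monoid, $(\mathcal{B},\cdot)$ is a monoid, and for all $a,b,c\in\mathcal{B}$: $a\cdot(b\oplus c)=a\cdot b\oplus a\cdot c$. A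 right $\mathscr{M}$-brace is defined similarly, with the axiom $(a\oplus b)\cdot c=a\cdot c\oplus b\cdot c$ for all $a,b,c\in\mathcal{B}$ instead. *)

theory Defs
  imports "HOL-Algebra.Group"
begin

definition left_divides :: "('a, 'b) monoid_scheme \<Rightarrow> 'a \<Rightarrow> 'a \<Rightarrow> bool" where
  "left_divides M a g \<longleftrightarrow> a \<in> carrier M \<and> g \<in> carrier M \<and>
     (\<exists>b\<in>carrier M. g = a \<otimes>\<^bsub>M\<^esub> b)"

definition right_divides :: "('a, 'b) monoid_scheme \<Rightarrow> 'a \<Rightarrow> 'a \<Rightarrow> bool" where
  "right_divides M a g \<longleftrightarrow> a \<in> carrier M \<and> g \<in> carrier M \<and>
     (\<exists>b\<in>carrier M. g = b \<otimes>\<^bsub>M\<^esub> a)"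

definition is_lcm_wrt :: "'a set \<Rightarrow> ('a \<Rightarrow> 'a \<Rightarrow> bool) \<Rightarrow> 'a \<Rightarrow> 'a \<Rightarrow> 'a \<Rightarrow> bool" where
  "is_lcm_wrt C R a b m \<longleftrightarrow> m \<in> C \<and> R a m \<and> R b m \<and>
     (\<forall>n\<in>C. R a n \<and> R b n \<longrightarrow> R m n)"

definition is_gcd_wrt :: "'a set \<Rightarrow> ('a \<Rightarrow> 'a \<Rightarrow> bool) \<Rightarrow> 'a \<Rightarrow> 'a \<Rightarrow> 'a \<Rightarrow> bool" where
  "is_gcd_wrt C R a b d \<longleftrightarrow> d \<in> C \<and> R d a \<and> R d b \<and>
     (\<forall>n\<in>C. R n a \<and> R n b \<longrightarrow> R n d)"

definition left_cancellative :: "('a, 'b) monoid_scheme \<Rightarrow> bool" where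
  "left_cancellative M \<longleftrightarrow> (\<forall>a\<in>carrier M. \<forall>b\<in>carrier M. \<forall>c\<in>carrier M.
     a \<otimes>\<^bsub>M\<^esub> b = a \<otimes>\<^bsub>M\<^esub> c \<longrightarrow> b = c)"

definition right_cancellative :: "('a, 'b) monoid_scheme \<Rightarrow> bool" where
  "right_cancellative M \<longleftrightarrow> (\<forall>a\<in>carrier M. \<forall>b\<in>carrier M. \<forall>c\<in>carrier M.
     b \<otimes>\<^bsub>M\<^esub> a = c \<otimes>\<^bsub>M\<^esub> a \<longrightarrow> b = c)"

definition is_atom :: "('a, 'b) monoid_scheme \<Rightarrow> 'a \<Rightarrow> bool" where
  "is_atom M a \<longleftrightarrow> a \<in> carrier M \<and> a \<noteq> \<one>\<^bsub>M\<^esub> \<and>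
     (\<forall>b\<in>carrier M. \<forall>c\<in>carrier M. a = b \<otimes>\<^bsub>M\<^esub> c \<longrightarrow> b = \<one>\<^bsub>M\<^esub> \<or> c = \<one>\<^bsub>M\<^esub>)"

definition atomic_monoid :: "('a, 'b) monoid_scheme \<Rightarrow> bool" where
  "atomic_monoid M \<longleftrightarrow> (\<forall>g\<in>carrier M. \<exists>xs. (\<forall>x\<in>set xs. is_atom M x) \<and>
     g = foldr (\<lambda>x y. x \<otimes>\<^bsub>M\<^esub> y) xs \<one>\<^bsub>M\<^esub>)"

definition lcm_monoid :: "('a, 'b) monoid_scheme \<Rightarrow> bool" where
  "lcm_monoid M \<longleftrightarrow> monoid M \<and> Units M = {\<one>\<^bsub>M\<^esub>} \<and> left_cancellative M \<and>
     (\<forall>a\<in>carrier M. \<forall>b\<in>carrier M. \<exists>m. is_lcm_wrt (carrier M) (left_divides M) a b m)"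

definition gaussian_monoid :: "('a, 'b) monoid_scheme \<Rightarrow> bool" where
  "gaussian_monoid M \<longleftrightarrow> monoid M \<and> atomic_monoid M \<and>
     left_cancellative M \<and> right_cancellative M \<and>
     (\<forall>a\<in>carrier M. \<forall>b\<in>carrier M.
        (\<exists>m. is_lcm_wrt (carrier M) (left_divides M) a b m) \<and>
        (\<exists>d. is_gcd_wrt (carrier M) (left_divides M) a b d) \<and>
        (\<exists>m. is_lcm_wrt (carrier M) (right_divides M) a b m) \<and>
        (\<exists>d. is_gcd_wrt (carrier M) (right_divides M) a b d))"

text \<open>A brace is given by an additive monoid record A (operation \<otimes> of A plays the role of \<oplus>)
  and a multiplicative monoid record P on the same carrier.\<close>
definition left_M_brace :: "'a monoid \<Rightarrow> 'a monoid \<Rightarrow> bool" where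
  "left_M_brace A P \<longleftrightarrow> comm_monoid A \<and> monoid P \<and> carrier A = carrier P \<and>
     (\<forall>a\<in>carrier P. \<forall>b\<in>carrier P. \<forall>c\<in>carrier P.
        a \<otimes>\<^bsub>P\<^esub> (b \<otimes>\<^bsub>A\<^esub> c) = (a \<otimes>\<^bsub>P\<^esub> b) \<otimes>\<^bsub>A\<^esub> (a \<otimes>\<^bsub>P\<^esub> c))"

definition right_M_brace :: "'a monoid \<Rightarrow> 'a monoid \<Rightarrow> bool" where
  "right_M_brace A P \<longleftrightarrow> comm_monoid A \<and> monoid P \<and> carrier A = carrier P \<and>
     (\<forall>a\<in>carrier P. \<forall>b\<in>carrier P. \<forall>c\<in>carrier P.
        (a \<otimes>\<^bsub>A\<^esub> b) \<otimes>\<^bsub>P\<^esub> c = (a \<otimes>\<^bsub>P\<^esub> c) \<otimes>\<^bsub>A\<^esub> (b \<otimes>\<^bsub>P\<^esub> c))"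

end

theory Submission
  imports Defs
begin

definition llcm :: "'a monoid \<Rightarrow> 'a \<Rightarrow> 'a \<Rightarrow> 'a" where
  "llcm M a b = (SOME m. is_lcm_wrt (carrier M) (left_divides M) a b m)"

definition lcmA :: "'a monoid \<Rightarrow> 'a monoid" where
  "lcmA M = \<lparr>carrier = carrier M, mult = llcm M, one = \<one>\<^bsub>M\<^esub>\<rparr>"

definition opp :: "'a monoid \<Rightarrow> 'a monoid" where
  "opp M = \<lparr>carrier = carrier M, mult = (\<lambda>x y. y \<otimes>\<^bsub>M\<^esub> x), one = \<one>\<^bsub>M\<^esub>\<rparr>"

locale lcmm =
  fixes M :: "'a monoid" (structure)
  assumes L: "lcm_monoid M"
begin

lemma mon: "monoid M" using L unfolding lcm_monoid_def by auto

lemma units: "Units M = {\<one>}" using L unfolding lcm_monoid_def by auto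

lemma lcan: "\<lbrakk>a \<in> carrier M; b \<in> carrier M; c \<in> carrier M; a \<otimes> b = a \<otimes> c\<rbrakk> \<Longrightarrow> b = c"
  using L unfolding lcm_monoid_def left_cancellative_def by blast

lemma ex: "\<lbrakk>a \<in> carrier M; b \<in> carrier M\<rbrakk> \<Longrightarrow> \<exists>m. is_lcm_wrt (carrier M) (left_divides M) a b m"
  using L unfolding lcm_monoid_def by blast

lemma ld_refl: "a \<in> carrier M \<Longrightarrow> left_divides M a a"
  unfolding left_divides_def using monoid.r_one[OF mon] monoid.one_closed[OF mon] by metis

lemma ld_trans: "left_divides M a b \<Longrightarrow> left_divides M b c \<Longrightarrow> left_divides M a c"
  unfolding left_divides_def using monoid.m_assoc[OF mon] monoid.m_closed[OF mon] by metis

lemma ld_one: "a \<in> carrier M \<Longrightarrow> left_divides M \<one> a"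
  unfolding left_divides_def using monoid.l_one[OF mon] monoid.one_closed[OF mon] by metis

lemma ld_antisym: assumes "left_divides M a b" "left_divides M b a" shows "a = b"
proof -
  interpret monoid M by (rule mon)
  obtain x y where xy: "x \<in> carrier M" "y \<in> carrier M" "b = a \<otimes> x" "a = b \<otimes> y"
    and c: "a \<in> carrier M" "b \<in> carrier M"
    using assms unfolding left_divides_def by blast
  have "a \<otimes> (x \<otimes> y) = (a \<otimes> x) \<otimes> y" using xy(1,2) c(1) by (simp add: m_assoc)
  also have "\<dots> = a" by (simp only: xy(3)[symmetric] xy(4)[symmetric])
  finally have "a \<otimes> \<one> = a \<otimes> (x \<otimes> y)" using c by simp
  hence 1: "x \<otimes> y = \<one>" using lcan c xy by (metis m_closed one_closed)
  have "x \<otimes> (y \<otimes> x) = x \<otimes> \<one>" using 1 xy by (simp flip: m_assoc)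
  hence 2: "y \<otimes> x = \<one>" using lcan xy by (metis m_closed one_closed)
  have "x \<in> Units M" unfolding Units_def using 1 2 xy by auto
  hence "x = \<one>" using units by auto
  thus ?thesis using xy c by simp
qed

lemma lcm_unique: "is_lcm_wrt (carrier M) (left_divides M) a b m \<Longrightarrow>
   is_lcm_wrt (carrier M) (left_divides M) a b m' \<Longrightarrow> m = m'"
  unfolding is_lcm_wrt_def using ld_antisym by blast

lemma llcm_is: "\<lbrakk>a \<in> carrier M; b \<in> carrier M\<rbrakk> \<Longrightarrow> is_lcm_wrt (carrier M) (left_divides M) a b (llcm M a b)"
  unfolding llcm_def using ex by (metis someI)

lemma llcm_eq: "\<lbrakk>a \<in> carrier M; b \<in> carrier M; is_lcm_wrt (carrier M) (left_divides M) a b m\<rbrakk> \<Longrightarrow> llcm M a b = m"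
  using llcm_is lcm_unique by blast

lemma llcm_closed: "\<lbrakk>a \<in> carrier M; b \<in> carrier M\<rbrakk> \<Longrightarrow> llcm M a b \<in> carrier M"
  using llcm_is unfolding is_lcm_wrt_def by blast

lemma ld_carr: "left_divides M a b \<Longrightarrow> a \<in> carrier M \<and> b \<in> carrier M"
  unfolding left_divides_def by blast

lemma llcm_comm: "\<lbrakk>a \<in> carrier M; b \<in> carrier M\<rbrakk> \<Longrightarrow> llcm M a b = llcm M b a"
  by (rule llcm_eq) (use llcm_is[of b a] in \<open>auto simp: is_lcm_wrt_def\<close>)

lemma llcm_assoc: assumes "a \<in> carrier M" "b \<in> carrier M" "c \<in> carrier M"
  shows "llcm M (llcm M a b) c = llcm M a (llcm M b c)"
proof -
  have ab: "is_lcm_wrt (carrier M) (left_divides M) a b (llcm M a b)"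
    and bc: "is_lcm_wrt (carrier M) (left_divides M) b c (llcm M b c)"
    and r: "is_lcm_wrt (carrier M) (left_divides M) a (llcm M b c) (llcm M a (llcm M b c))"
    using llcm_is llcm_closed assms by auto
  show ?thesis
    apply (rule llcm_eq)
    using llcm_closed assms apply auto[2]
    using ab bc r unfolding is_lcm_wrt_def by (meson ld_trans)
qed

lemma llcm_one: "a \<in> carrier M \<Longrightarrow> llcm M \<one> a = a"
  by (rule llcm_eq) (auto simp: is_lcm_wrt_def ld_refl ld_one monoid.one_closed[OF mon] dest: ld_carr)

lemma llcm_distrib: assumes a: "a \<in> carrier M" "b \<in> carrier M" "c \<in> carrier M"
  shows "a \<otimes> llcm M b c = llcm M (a \<otimes> b) (a \<otimes> c)"
proof -
  interpret monoid M by (rule mon)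
  have bc: "is_lcm_wrt (carrier M) (left_divides M) b c (llcm M b c)" using llcm_is a by auto
  have mc: "llcm M b c \<in> carrier M" using llcm_closed a by auto
  have "is_lcm_wrt (carrier M) (left_divides M) (a \<otimes> b) (a \<otimes> c) (a \<otimes> llcm M b c)"
    unfolding is_lcm_wrt_def
  proof (intro conjI ballI impI)
    show "a \<otimes> llcm M b c \<in> carrier M" using mc a by simp
    show "left_divides M (a \<otimes> b) (a \<otimes> llcm M b c)"
      using bc a mc unfolding is_lcm_wrt_def left_divides_def by (auto simp: m_assoc)
    show "left_divides M (a \<otimes> c) (a \<otimes> llcm M b c)"
    proof -
      obtain z where z: "z \<in> carrier M" "llcm M b c = c \<otimes> z"
        using bc unfolding is_lcm_wrt_def left_divides_def by blast
      have "a \<otimes> llcm M b c = (a \<otimes> c) \<otimes> z" using z a by (simp add: m_assoc)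
      thus ?thesis unfolding left_divides_def using z a mc by blast
    qed
    fix n assume n: "n \<in> carrier M" "left_divides M (a \<otimes> b) n \<and> left_divides M (a \<otimes> c) n"
    then obtain x y where x: "x \<in> carrier M" "n = a \<otimes> b \<otimes> x" and y: "y \<in> carrier M" "n = a \<otimes> c \<otimes> y"
      unfolding left_divides_def by blast
    have e1: "n = a \<otimes> (b \<otimes> x)" using x a by (simp add: m_assoc)
    have e2: "n = a \<otimes> (c \<otimes> y)" using y a by (simp add: m_assoc)
    have "a \<otimes> (b \<otimes> x) = a \<otimes> (c \<otimes> y)" using e1 e2 by simp
    hence e: "b \<otimes> x = c \<otimes> y" by (rule lcan[OF a(1) m_closed[OF a(2) x(1)] m_closed[OF a(3) y(1)]])
    have d1: "left_divides M b (b \<otimes> x)" unfolding left_divides_def using a(2) x(1) by auto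
    have d2: "left_divides M c (b \<otimes> x)" unfolding left_divides_def using a(3) y(1) x(1) a(2) e by auto
    have "left_divides M (llcm M b c) (b \<otimes> x)" using bc d1 d2 a(2) x(1) unfolding is_lcm_wrt_def by blast
    then obtain z where z: "z \<in> carrier M" "b \<otimes> x = llcm M b c \<otimes> z" unfolding left_divides_def by blast
    have "n = (a \<otimes> llcm M b c) \<otimes> z" using e1 z a mc by (simp add: m_assoc)
    thus "left_divides M (a \<otimes> llcm M b c) n"
      unfolding left_divides_def using z a mc n(1) by blast
  qed
  thus ?thesis using a by (intro llcm_eq[symmetric]) auto
qed

lemma brace: "left_M_brace (lcmA M) M"
  unfolding left_M_brace_def
proof (intro conjI ballI)
  show "comm_monoid (lcmA M)"
  proof (rule comm_monoidI)
    fix x y z assume "x \<in> carrier (lcmA M)" "y \<in> carrier (lcmA M)" "z \<in> carrier (lcmA M)"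
    thus "x \<otimes>\<^bsub>lcmA M\<^esub> y \<in> carrier (lcmA M)"
      "x \<otimes>\<^bsub>lcmA M\<^esub> y \<otimes>\<^bsub>lcmA M\<^esub> z = x \<otimes>\<^bsub>lcmA M\<^esub> (y \<otimes>\<^bsub>lcmA M\<^esub> z)"
      "x \<otimes>\<^bsub>lcmA M\<^esub> y = y \<otimes>\<^bsub>lcmA M\<^esub> x"
      "\<one>\<^bsub>lcmA M\<^esub> \<otimes>\<^bsub>lcmA M\<^esub> x = x"
      unfolding lcmA_def by (simp_all add: llcm_closed llcm_assoc llcm_one) (rule llcm_comm; simp)
  next
    show "\<one>\<^bsub>lcmA M\<^esub> \<in> carrier (lcmA M)" by (simp add: lcmA_def monoid.one_closed[OF mon])
  qed
  show "monoid M" by (rule mon)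
  show "carrier (lcmA M) = carrier M" by (simp add: lcmA_def)
  fix a b c assume "a \<in> carrier M" "b \<in> carrier M" "c \<in> carrier M"
  thus "a \<otimes> (b \<otimes>\<^bsub>lcmA M\<^esub> c) = a \<otimes> b \<otimes>\<^bsub>lcmA M\<^esub> (a \<otimes> c)"
    unfolding lcmA_def monoid.select_convs by (rule llcm_distrib)
qed

end

lemma opp_lcm:
  assumes L: "lcm_monoid M" and G: "gaussian_monoid M"
  shows "lcm_monoid (opp M)"
proof -
  interpret monoid M using L unfolding lcm_monoid_def by auto
  have mo: "monoid (opp M)"
    by (rule monoidI) (auto simp: opp_def m_assoc)
  have "Units (opp M) = Units M" unfolding Units_def opp_def by auto
  hence u: "Units (opp M) = {\<one>\<^bsub>opp M\<^esub>}" using L unfolding lcm_monoid_def opp_def by auto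
  have rc: "right_cancellative M" using G unfolding gaussian_monoid_def by blast
  have lc: "left_cancellative (opp M)"
    using rc unfolding right_cancellative_def left_cancellative_def opp_def
    by (simp only: partial_object.select_convs monoid.select_convs)
  have ld: "left_divides (opp M) = right_divides M"
    unfolding left_divides_def right_divides_def opp_def by auto
  have ex: "\<forall>a\<in>carrier M. \<forall>b\<in>carrier M. \<exists>m. is_lcm_wrt (carrier M) (right_divides M) a b m"
    using G unfolding gaussian_monoid_def by blast
  have co: "carrier (opp M) = carrier M" by (simp add: opp_def)
  show ?thesis unfolding lcm_monoid_def ld co
    using mo u lc ex by blast
qed

lemma right_from_opp:
  assumes "left_M_brace A (opp M)" "monoid M"
  shows "right_M_brace A M"
  using assms unfolding left_M_brace_def right_M_brace_def opp_def by auto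

theorem theoremA:
  fixes M :: "'a monoid"
  assumes "lcm_monoid M"
  shows "(\<exists>A P :: 'a monoid. left_M_brace A P \<and> P \<cong> M) \<and>
         (gaussian_monoid M \<longrightarrow>
            (\<exists>A A' P :: 'a monoid. left_M_brace A P \<and> right_M_brace A' P \<and> P \<cong> M))"
proof -
  interpret lcmm M using assms by unfold_locales
  have 1: "left_M_brace (lcmA M) M" by (rule brace)
  show ?thesis
  proof (intro conjI impI)
    show "\<exists>A P :: 'a monoid. left_M_brace A P \<and> P \<cong> M" using 1 iso_refl by blast
  next
    assume G: "gaussian_monoid M"
    interpret o: lcmm "opp M" using opp_lcm[OF assms G] by unfold_locales
    have "right_M_brace (lcmA (opp M)) M" using right_from_opp o.brace mon by blast
    thus "\<exists>A A' P :: 'a monoid. left_M_brace A P \<and> right_M_brace A' P \<and> P \<cong> M" using 1 iso_refl by blast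
  qed
qed

end
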